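(* Let $A$ be a VPA with $\emptyset\subsetneq\mathcal L(A)\subsetneq\Sigma^*$ and assume $S_0$ is bounded. For each $\tau\in Q^Q$ let $R_\tau$ be a bounded overapproximation of $\tau^{-1}S_1$, and let $\mathrm{RegFlat}=R_0(\Sigma_c\cup R_1)^*$ where $R_1=\bigcup_{\tau\in Q^Q}\tau R_\tau$ and $R_0=\bigcup_{\tau\in Q^Q}\mathsf{Suf}(R_\tau)$. If $\mathrm{RegFlat}$ contains a linear fooling set for $\nu_f$, then $\mathrm{Flat}$ also contains a linear fooling set for $\nu_f$.
   Context: VPA $A=(Q,\Sigma,\Gamma,\bot,q_0,\delta,F)$ over a pushdown alphabet $\Sigma=\Sigma_c\cup\Sigma_r\cup\Sigma_{\mathit{int}}$ ($\Sigma_c,\Sigma_r\ne\emptyset$), with configurations $\alpha q$ ($\alpha\in\bot(\Gamma\setminus\{\bot\})^*$), call letters pushing via $\delta_c:Q\times\Sigma_c\to(\Gamma\setminus\{\bot\})\times Q$, internal letters via $\delta_{\mathit{int}}:Q\times\Sigma_{\mathit{int}}\to Q$, return letters popping the top $\gamma\ne\bot$ via $\delta_r:Q\times\Sigma_r\times\Gamma\to Q$ (or reading $\bot$ without popping). $\delta(c,w)$ is the configuration reached; $\mathcal L(c)$ the words leading from $c$ to a state in $F$. $W$: well-matched words (smallest set containing $\varepsilon$, $\Sigma_{\mathit{int}}$, closed under concatenation and $w\mapsto awb$, $a\in\Sigma_c$, $b\in\Sigma_r$); $D$: descending words (products of well-matched words and return letters); $\varphi:W\to Q^Q$ with $\delta(\alpha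 p,w)=\alpha\varphi(w)(p)$. $\mathrm{rConf}$: configurations reachable from $\bot q_0$; $\mathsf{rep}(c)$: length-lexicographically least (for fixed linear orders on $\Gamma,Q$) $c'\in\mathrm{rConf}$ with $\mathcal L(c')=\mathcal L(c)$; $\nu_A(w)=\mathsf{rep}(\delta(\bot q_0,w))$. For $w=a_1\cdots a_n\in D$, $\nu_A(a_i\cdots a_n)=\bot q_i$; $\sigma_0(w)=q_1\cdots q_n$; for nonempty $w\in W$, $\sigma_1(w)=\varphi(w)q_2\cdots q_n$. $S_0=\sigma_0(D)$, $S_1=\sigma_1(W\setminus\{\varepsilon\})$. $\Sigma_f=\Sigma_c\cup Q\cup Q^Q$ (disjoint); $\mathrm{AllFlat}=Q^*(\Sigma_c\cup Q^QQ^* )^*$ with unique factorization $s_0s_1\cdots s_m$, $s_0\in Q^*$, $s_i\in\Sigma_c\cup Q^QQ^*$. $t_f$: $t_f(\varepsilon)=\bot q_0$, $t_f(q_1\cdots q_n)=\bot q_1$ ($n\ge1$), $t_f(s_0\cdots s_m)=\delta(t_f(s_0\cdots s_{m-1}),s_m)$ if $s_m\in\Sigma_c$, and $=\alpha\tau(q)$ if $s_m=\tau q_2\cdots q_k$ and $t_f(s_0\cdots s_{m-1})=\alpha q$. $\nu_f=\mathsf{rep}\circ t_f$ with domain $\mathrm{AllFlat}$. $\mathrm{Flat}=S_0(\Sigma_c\cup S_1)^*$. Bounded language: subset of $w_1^*\cdots w_k^*$. $\tau^{-1}S_1=\{x:\tau x\in S_1\}$. $\Psi(a_1\cdots a_n)=\{(a_i,n-i+1)\}$,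 $\Psi(K)=\bigcup_{w\in K}\Psi(w)$. A bounded overapproximation of a bounded context-free $K$ is a bounded regular $R\supseteq K$ with $\{|w|:w\in K\}=\{|w|:w\in R\}$ and $\Psi(K)=\Psi(R)$. $\mathsf{Suf}(L)$: all suffixes of words of $L$. A linear fooling scheme for a partial function $t$ on $\Sigma_f^*$ is $(u_2,v_2,u,v,Z)$ with $u_2$ a suffix of $u$, $v_2$ a suffix of $v$, $|u_2|=|v_2|$, $\{u_2,v_2\}\{u,v\}^*Z\subseteq\mathrm{dom}(t)$, and for each $n$ some $z_n\in Z$ with $|z_n|\in O(n)$ and $t(u_2wz_n)\ne t(v_2wz_n)$ for all $w\in\{u,v\}^{\le n}$; the set $\{u_2,v_2\}\{u,v\}^*Z$ is a linear fooling set, and a language contains one if such a set is a subset of it. *)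

theory Defs
  imports Main "HOL-Library.Landau_Symbols"
begin

text \<open>States are the finite linearly ordered type 'q
 (Q = UNIV), stack symbols the finite linearly ordered type 'g (Gamma = UNIV).\<close>

datatype kind = Call | Ret | Internal

record ('a, 'q, 'g) vpa =
  kind :: "'a \<Rightarrow> kind"
  bot  :: 'g
  q0   :: 'q
  dcall :: "'q \<Rightarrow> 'a \<Rightarrow> 'g \<times> 'q"
  dint  :: "'q \<Rightarrow> 'a \<Rightarrow> 'q"
  dret  :: "'q \<Rightarrow> 'a \<Rightarrow> 'g \<Rightarrow> 'q"
  fin   :: "'q set"

definition wf_vpa :: "('a::finite, 'q::{finite,linorder}, 'g::{finite,linorder}) vpa \<Rightarrow> bool" where
  "wf_vpa A \<longleftrightarrow> (\<exists>a. kind A a = Call) \<and> (\<exists>b. kind A b = Ret)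
     \<and> (\<forall>q a. fst (dcall A q a) \<noteq> bot A)"

text \<open>A configuration alpha q: alpha is the stack written bottom-first
 (so its first symbol is bot and its last symbol is the top), q the state.\<close>
type_synonym ('q, 'g) conf = "'g list \<times> 'q"

definition step :: "('a, 'q, 'g) vpa \<Rightarrow> ('q, 'g) conf \<Rightarrow> 'a \<Rightarrow> ('q, 'g) conf" where
  "step A c x = (let (\<alpha>, q) = c in
     (case kind A x of
        Call \<Rightarrow> (let (g, p) = dcall A q x in (\<alpha> @ [g], p))
      | Internal \<Rightarrow> (\<alpha>, dint A q x)
      | Ret \<Rightarrow> (if last \<alpha> = bot A then (\<alpha>, dret A q x (bot A))
               else (butlast \<alpha>, dret A q x (last \<alpha>)))))"

definition delta :: "('a, 'q, 'g) vpa \<Rightarrow> ('q, 'g) conf \<Rightarrow> 'a list \<Rightarrow> ('q, 'g) conf" where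
  "delta A c w = foldl (step A) c w"

definition init_conf :: "('a, 'q, 'g) vpa \<Rightarrow> ('q, 'g) conf" where
  "init_conf A = ([bot A], q0 A)"

definition lang_conf :: "('a, 'q, 'g) vpa \<Rightarrow> ('q, 'g) conf \<Rightarrow> 'a list set" where
  "lang_conf A c = {w. snd (delta A c w) \<in> fin A}"

definition lang :: "('a, 'q, 'g) vpa \<Rightarrow> 'a list set" where
  "lang A = lang_conf A (init_conf A)"

definition rConf :: "('a, 'q, 'g) vpa \<Rightarrow> ('q, 'g) conf set" where
  "rConf A = {delta A (init_conf A) w | w. True}"

definition conf_word :: "('q, 'g) conf \<Rightarrow> ('g + 'q) list" where
  "conf_word c = map Inl (fst c) @ [Inr (snd c)]"

definition sym_less :: "(('g::linorder + 'q::linorder) \<times> ('g + 'q)) set" where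
  "sym_less = {(Inl x, Inl y) | x y. x < y} \<union> {(Inr x, Inr y) | x y. x < y}"

definition conf_less :: "('q::linorder, 'g::linorder) conf \<Rightarrow> ('q, 'g) conf \<Rightarrow> bool" where
  "conf_less c d \<longleftrightarrow> (conf_word c, conf_word d) \<in> lenlex sym_less"

definition rep :: "('a, 'q::linorder, 'g::linorder) vpa \<Rightarrow> ('q, 'g) conf \<Rightarrow> ('q, 'g) conf option" where
  "rep A c = (if \<exists>c'\<in>rConf A. lang_conf A c' = lang_conf A c
     then Some (THE c'. c' \<in> rConf A \<and> lang_conf A c' = lang_conf A c \<and>
                 (\<forall>d\<in>rConf A. lang_conf A d = lang_conf A c \<longrightarrow> d = c' \<or> conf_less c' d))
     else None)"

definition nuA :: "('a, 'q::linorder, 'g::linorder) vpa \<Rightarrow> 'a list \<Rightarrow> ('q, 'g) conf option" where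
  "nuA A w = rep A (delta A (init_conf A) w)"

inductive_set WM :: "('a, 'q, 'g) vpa \<Rightarrow> 'a list set" for A where
  wm_eps: "[] \<in> WM A"
| wm_int: "kind A i = Internal \<Longrightarrow> [i] \<in> WM A"
| wm_cat: "u \<in> WM A \<Longrightarrow> v \<in> WM A \<Longrightarrow> u @ v \<in> WM A"
| wm_nest: "kind A a = Call \<Longrightarrow> kind A b = Ret \<Longrightarrow> w \<in> WM A \<Longrightarrow> a # w @ [b] \<in> WM A"

inductive_set Desc :: "('a, 'q, 'g) vpa \<Rightarrow> 'a list set" for A where
  desc_eps: "[] \<in> Desc A"
| desc_wm: "w \<in> WM A \<Longrightarrow> v \<in> Desc A \<Longrightarrow> w @ v \<in> Desc A"
| desc_ret: "kind A b = Ret \<Longrightarrow> v \<in> Desc A \<Longrightarrow> b # v \<in> Desc A"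

text \<open>phi(w): the state transformation of a well-matched word, delta(alpha p, w) = alpha phi(w)(p).\<close>
definition phi :: "('a, 'q, 'g) vpa \<Rightarrow> 'a list \<Rightarrow> 'q \<Rightarrow> 'q" where
  "phi A w = (\<lambda>p. snd (delta A ([bot A], p) w))"

text \<open>Sigma_f = Sigma_c + Q + Q^Q (disjoint union); only FC a with a a call letter belong to Sigma_f.\<close>
datatype ('a, 'q) fsym = FC 'a | FQ 'q | FT "'q \<Rightarrow> 'q"

text \<open>For w = a_1...a_n descending, nu_A(a_i...a_n) = bot q_i; sigma0 w = q_1...q_n.\<close>
definition sigma0 :: "('a, 'q::linorder, 'g::linorder) vpa \<Rightarrow> 'a list \<Rightarrow> 'q list" where
  "sigma0 A w = map (\<lambda>i. snd (the (nuA A (drop i w)))) [0..<length w]"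

definition sigma1 :: "('a, 'q::linorder, 'g::linorder) vpa \<Rightarrow> 'a list \<Rightarrow> ('a, 'q) fsym list" where
  "sigma1 A w = FT (phi A w) # map FQ (tl (sigma0 A w))"

definition S0 :: "('a, 'q::linorder, 'g::linorder) vpa \<Rightarrow> ('a, 'q) fsym list set" where
  "S0 A = (\<lambda>w. map FQ (sigma0 A w)) ` Desc A"

definition S1 :: "('a, 'q::linorder, 'g::linorder) vpa \<Rightarrow> ('a, 'q) fsym list set" where
  "S1 A = sigma1 A ` (WM A - {[]})"

definition conc :: "'b list set \<Rightarrow> 'b list set \<Rightarrow> 'b list set" where
  "conc K L = {u @ v | u v. u \<in> K \<and> v \<in> L}"

definition kstar :: "'b list set \<Rightarrow> 'b list set" where
  "kstar L = {concat ws | ws. set ws \<subseteq> L}"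

definition Suf :: "'b list set \<Rightarrow> 'b list set" where
  "Suf L = {v. \<exists>u. u @ v \<in> L}"

definition calls_f :: "('a, 'q, 'g) vpa \<Rightarrow> ('a, 'q) fsym list set" where
  "calls_f A = {[FC a] | a. kind A a = Call}"

definition lquot :: "('q \<Rightarrow> 'q) \<Rightarrow> ('a, 'q) fsym list set \<Rightarrow> ('a, 'q) fsym list set" where
  "lquot \<tau> L = {x. FT \<tau> # x \<in> L}"

definition Flat :: "('a, 'q::linorder, 'g::linorder) vpa \<Rightarrow> ('a, 'q) fsym list set" where
  "Flat A = conc (S0 A) (kstar (calls_f A \<union> S1 A))"

text \<open>AllFlat = Q^*(Sigma_c \<union> Q^Q Q^*)^*, with its (unique) factorization s0 s1 ... sm.\<close>
definition qwords :: "('a, 'q) fsym list set" where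
  "qwords = {map FQ qs | qs. True}"

definition flat_factor :: "('a, 'q, 'g) vpa \<Rightarrow> ('a, 'q) fsym list set" where
  "flat_factor A = calls_f A \<union> {FT \<tau> # x | \<tau> x. x \<in> qwords}"

definition is_fact :: "('a, 'q, 'g) vpa \<Rightarrow> ('a, 'q) fsym list \<Rightarrow> ('a, 'q) fsym list \<times> ('a, 'q) fsym list list \<Rightarrow> bool" where
  "is_fact A w f \<longleftrightarrow> w = fst f @ concat (snd f) \<and> fst f \<in> qwords \<and> set (snd f) \<subseteq> flat_factor A"

definition AllFlat :: "('a, 'q, 'g) vpa \<Rightarrow> ('a, 'q) fsym list set" where
  "AllFlat A = {w. \<exists>f. is_fact A w f}"

fun unFQ :: "('a, 'q) fsym \<Rightarrow> 'q" where
  "unFQ (FQ q) = q"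
| "unFQ _ = undefined"

fun tf_step :: "('a, 'q, 'g) vpa \<Rightarrow> ('q, 'g) conf \<Rightarrow> ('a, 'q) fsym list \<Rightarrow> ('q, 'g) conf" where
  "tf_step A c (FC a # _) = delta A c [a]"
| "tf_step A c (FT \<tau> # _) = (fst c, \<tau> (snd c))"
| "tf_step A c _ = c"

definition tf_fact :: "('a, 'q, 'g) vpa \<Rightarrow> ('a, 'q) fsym list \<times> ('a, 'q) fsym list list \<Rightarrow> ('q, 'g) conf" where
  "tf_fact A f = foldl (tf_step A)
     (if fst f = [] then init_conf A else ([bot A], unFQ (hd (fst f)))) (snd f)"

definition tf :: "('a, 'q, 'g) vpa \<Rightarrow> ('a, 'q) fsym list \<Rightarrow> ('q, 'g) conf" where
  "tf A w = tf_fact A (THE f. is_fact A w f)"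

definition nu_f :: "('a, 'q::linorder, 'g::linorder) vpa \<Rightarrow> ('a, 'q) fsym list \<Rightarrow> ('q, 'g) conf option" where
  "nu_f A w = (if w \<in> AllFlat A then rep A (tf A w) else None)"

fun star_prod :: "'b list list \<Rightarrow> 'b list set" where
  "star_prod [] = {[]}"
| "star_prod (w # ws) = {concat (replicate n w) @ v | n v. v \<in> star_prod ws}"

definition bounded_lang :: "'b list set \<Rightarrow> bool" where
  "bounded_lang L \<longleftrightarrow> (\<exists>ws. L \<subseteq> star_prod ws)"

definition regular_lang :: "'b list set \<Rightarrow> bool" where
  "regular_lang L \<longleftrightarrow> (\<exists>(n::nat) (d :: nat \<Rightarrow> 'b \<Rightarrow> nat) s F.
      s < n \<and> (\<forall>q<n. \<forall>x. d q x < n) \<and> L = {w. foldl d s w \<in> F})"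

definition Psi_w :: "'b list \<Rightarrow> ('b \<times> nat) set" where
  "Psi_w w = {(w ! i, length w - i) | i. i < length w}"

definition Psi :: "'b list set \<Rightarrow> ('b \<times> nat) set" where
  "Psi K = (\<Union>w\<in>K. Psi_w w)"

definition bounded_overapprox :: "'b list set \<Rightarrow> 'b list set \<Rightarrow> bool" where
  "bounded_overapprox K R \<longleftrightarrow> bounded_lang R \<and> regular_lang R \<and> K \<subseteq> R
     \<and> length ` K = length ` R \<and> Psi K = Psi R"

definition fool_set :: "'b list \<Rightarrow> 'b list \<Rightarrow> 'b list \<Rightarrow> 'b list \<Rightarrow> 'b list set \<Rightarrow> 'b list set" where
  "fool_set u2 v2 u v Z = conc {u2, v2} (conc (kstar {u, v}) Z)"

definition upto_pow :: "'b list \<Rightarrow> 'b list \<Rightarrow> nat \<Rightarrow> 'b list set" where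
  "upto_pow u v n = {concat ws | ws. set ws \<subseteq> {u, v} \<and> length ws \<le> n}"

definition linear_fooling_scheme ::
  "('b list \<Rightarrow> 'c option) \<Rightarrow> 'b list \<Rightarrow> 'b list \<Rightarrow> 'b list \<Rightarrow> 'b list \<Rightarrow> 'b list set \<Rightarrow> bool" where
  "linear_fooling_scheme t u2 v2 u v Z \<longleftrightarrow>
     (\<exists>x. u = x @ u2) \<and> (\<exists>y. v = y @ v2) \<and> length u2 = length v2 \<and>
     fool_set u2 v2 u v Z \<subseteq> {w. t w \<noteq> None} \<and>
     (\<exists>z :: nat \<Rightarrow> 'b list. (\<forall>n. z n \<in> Z) \<and>
        (\<lambda>n. real (length (z n))) \<in> O(\<lambda>n. real n) \<and>
        (\<forall>n. \<forall>w\<in>upto_pow u v n. t (u2 @ w @ z n) \<noteq> t (v2 @ w @ z n)))"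

definition contains_lin_fooling_set :: "'b list set \<Rightarrow> ('b list \<Rightarrow> 'c option) \<Rightarrow> bool" where
  "contains_lin_fooling_set L t \<longleftrightarrow>
     (\<exists>u2 v2 u v Z. linear_fooling_scheme t u2 v2 u v Z \<and> fool_set u2 v2 u v Z \<subseteq> L)"

definition RegFlat :: "('a, 'q, 'g) vpa \<Rightarrow> (('q \<Rightarrow> 'q) \<Rightarrow> ('a, 'q) fsym list set) \<Rightarrow> ('a, 'q) fsym list set" where
  "RegFlat A R = conc (\<Union>\<tau>. Suf (R \<tau>)) (kstar (calls_f A \<union> (\<Union>\<tau>. (\<lambda>x. FT \<tau> # x) ` R \<tau>)))"

end

theory Submission
  imports Defs
begin



fun isQ :: "('a,'q) fsym \<Rightarrow> bool" where
  "isQ (FQ _) = True" | "isQ _ = False"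

definition allQ :: "('a,'q) fsym list \<Rightarrow> bool" where
  "allQ w \<longleftrightarrow> (\<forall>s\<in>set w. isQ s)"

definition lead :: "('a,'q) fsym list \<Rightarrow> ('a,'q) fsym list" where
  "lead w = takeWhile isQ w"

function blk :: "('a,'q) fsym list \<Rightarrow> (('a,'q) fsym \<times> ('a,'q) fsym list) list" where
  "blk [] = []"
| "blk (c # W) = (c, takeWhile isQ W) # blk (dropWhile isQ W)"
  by pat_completeness auto
termination
  by (relation "measure length") (auto simp: le_imp_less_Suc length_dropWhile_le)

definition bl :: "('a,'q) fsym list \<Rightarrow> (('a,'q) fsym \<times> ('a,'q) fsym list) list" where
  "bl w = blk (dropWhile isQ w)"

definition cr :: "('a,'q) fsym \<times> ('a,'q) fsym list \<Rightarrow> ('a,'q) fsym list" where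
  "cr b = fst b # snd b"

definition goodbs :: "(('a,'q) fsym \<times> ('a,'q) fsym list) list \<Rightarrow> bool" where
  "goodbs bs \<longleftrightarrow> (\<forall>b\<in>set bs. \<not> isQ (fst b) \<and> allQ (snd b))"

definition piQ :: "('a,'q) fsym list \<Rightarrow> ('a,'q) fsym list" where
  "piQ w = filter (\<lambda>s. \<not> isQ s) w"

lemma allQ_append[simp]: "allQ (a @ b) \<longleftrightarrow> allQ a \<and> allQ b"
  by (auto simp: allQ_def)
lemma allQ_simps[simp]: "allQ []" "allQ (s # w) \<longleftrightarrow> isQ s \<and> allQ w"
  by (auto simp: allQ_def)

lemma goodbs_simps[simp]: "goodbs []" "goodbs (b # bs) \<longleftrightarrow> \<not> isQ (fst b) \<and> allQ (snd b) \<and> goodbs bs"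
  "goodbs (bs @ cs) \<longleftrightarrow> goodbs bs \<and> goodbs cs"
  by (auto simp: goodbs_def)

lemma concat_blk: "concat (map cr (blk W)) = W"
  by (induction W rule: blk.induct) (auto simp: cr_def)

lemma allQ_takeWhile: "allQ (takeWhile isQ W)"
  by (auto simp: allQ_def dest: set_takeWhileD)

lemma goodbs_blk: "W = [] \<or> \<not> isQ (hd W) \<Longrightarrow> goodbs (blk W)"
proof (induction W rule: blk.induct)
  case 1 then show ?case by simp
next
  case (2 c W)
  have "dropWhile isQ W = [] \<or> \<not> isQ (hd (dropWhile isQ W))"
    by (metis dropWhile_eq_Nil_conv hd_dropWhile)
  with 2 show ?case by (simp add: allQ_takeWhile)
qed

lemma goodbs_bl: "goodbs (bl W)"
  unfolding bl_def by (rule goodbs_blk) (metis dropWhile_eq_Nil_conv hd_dropWhile)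

lemma allQ_lead: "allQ (lead W)"
  by (simp add: lead_def allQ_takeWhile)

lemma decomp: "W = lead W @ concat (map cr (bl W))"
  by (simp add: lead_def bl_def concat_blk)

lemma takeWhile_concat_good: "goodbs bs \<Longrightarrow> takeWhile isQ (concat (map cr bs)) = []"
  by (cases bs) (auto simp: cr_def)

lemma dropWhile_concat_good: "goodbs bs \<Longrightarrow> dropWhile isQ (concat (map cr bs)) = concat (map cr bs)"
  by (cases bs) (auto simp: cr_def)

lemma takeWhile_allQ: "allQ l \<Longrightarrow> takeWhile isQ (l @ w) = l @ takeWhile isQ w"
  by (induction l) auto
lemma dropWhile_allQ: "allQ l \<Longrightarrow> dropWhile isQ (l @ w) = dropWhile isQ w"
  by (induction l) auto

lemma blk_concat: "goodbs bs \<Longrightarrow> blk (concat (map cr bs)) = bs"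
proof (induction bs)
  case Nil then show ?case by simp
next
  case (Cons b bs)
  obtain c r where b: "b = (c, r)" by (cases b)
  from Cons have r: "allQ r" and g: "goodbs bs" by (auto simp: b)
  have "concat (map cr (b # bs)) = c # (r @ concat (map cr bs))" by (simp add: b cr_def)
  moreover have "takeWhile isQ (r @ concat (map cr bs)) = r"
    using takeWhile_allQ[OF r] takeWhile_concat_good[OF g] by simp
  moreover have "dropWhile isQ (r @ concat (map cr bs)) = concat (map cr bs)"
    using dropWhile_allQ[OF r] dropWhile_concat_good[OF g] by simp
  ultimately show ?case using Cons g by (simp add: b)
qed

lemma uniq_decomp:
  assumes "allQ l" "goodbs bs"
  shows "lead (l @ concat (map cr bs)) = l" "bl (l @ concat (map cr bs)) = bs"
  using assms by (simp_all add: lead_def bl_def takeWhile_allQ takeWhile_concat_good dropWhile_allQ dropWhile_concat_good blk_concat)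

lemma bl_Nil_allQ: "bl a = [] \<Longrightarrow> allQ a"
  by (metis allQ_lead append.right_neutral concat.simps(1) decomp list.simps(8))

lemma concat1:
  assumes "bl a = []"
  shows "lead (a @ b) = a @ lead b" "bl (a @ b) = bl b"
proof -
  have "a @ b = (a @ lead b) @ concat (map cr (bl b))" by (metis append.assoc decomp)
  then show "lead (a @ b) = a @ lead b" "bl (a @ b) = bl b"
    using uniq_decomp[of "a @ lead b" "bl b"] bl_Nil_allQ[OF assms] allQ_lead goodbs_bl by auto
qed

lemma concat2:
  assumes "bl a \<noteq> []"
  shows "lead (a @ b) = lead a"
    "bl (a @ b) = butlast (bl a) @ [(fst (last (bl a)), snd (last (bl a)) @ lead b)] @ bl b"
proof -
  let ?bs = "butlast (bl a) @ [(fst (last (bl a)), snd (last (bl a)) @ lead b)] @ bl b"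
  have ba: "bl a = butlast (bl a) @ [last (bl a)]" using assms by simp
  have g: "goodbs (bl a)" by (rule goodbs_bl)
  have g1: "goodbs (butlast (bl a)) \<and> \<not> isQ (fst (last (bl a))) \<and> allQ (snd (last (bl a)))"
    using g by (subst (asm) ba) simp
  have g2: "goodbs ?bs" using g1 goodbs_bl[of b] allQ_lead[of b] unfolding goodbs_def by auto
  have "a @ b = lead a @ concat (map cr ?bs)"
  proof -
    have e: "concat (map cr (bl a)) = concat (map cr (butlast (bl a))) @ cr (last (bl a))"
      by (subst ba) simp
    have "a = lead a @ concat (map cr (bl a))" by (rule decomp)
    then have ea: "a = lead a @ concat (map cr (butlast (bl a))) @ cr (last (bl a))"
      by (simp only: e)
    have eb: "b = lead b @ concat (map cr (bl b))" by (rule decomp)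
    have "a @ b = (lead a @ concat (map cr (butlast (bl a))) @ cr (last (bl a))) @ (lead b @ concat (map cr (bl b)))"
      using ea eb by (rule arg_cong2)
    then show ?thesis by (simp add: cr_def)
  qed
  then show "lead (a @ b) = lead a" "bl (a @ b) = ?bs"
    using uniq_decomp[OF allQ_lead g2] by simp_all
qed

lemma concat3: "\<exists>pre. bl (a @ b) = pre @ bl b"
  by (cases "bl a = []") (auto simp: concat1 concat2)

lemma concat4:
  assumes "bl x \<noteq> []"
  shows "\<exists>pre. bl (a @ x @ b) = pre @ butlast (bl x) @ [(fst (last (bl x)), snd (last (bl x)) @ lead b)] @ bl b"
proof -
  obtain pre where p: "bl (a @ x) = pre @ bl x" using concat3 by blast
  have ne: "bl (a @ x) \<noteq> []" using p assms by simp
  have "bl ((a @ x) @ b) = butlast (bl (a @ x)) @ [(fst (last (bl (a @ x))), snd (last (bl (a @ x))) @ lead b)] @ bl b"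
    by (rule concat2(2)[OF ne])
  moreover have "butlast (bl (a @ x)) = pre @ butlast (bl x)" "last (bl (a @ x)) = last (bl x)"
    using p assms by (simp_all add: butlast_append)
  ultimately show ?thesis by auto
qed

lemma pi_append[simp]: "piQ (a @ b) = piQ a @ piQ b"
  by (simp add: piQ_def)
lemma pi_allQ: "allQ a \<Longrightarrow> piQ a = []"
  by (simp add: piQ_def allQ_def)
lemma pi_concat_good: "goodbs bs \<Longrightarrow> piQ (concat (map cr bs)) = map fst bs"
  by (induction bs) (auto simp: cr_def piQ_def allQ_def filter_empty_conv)
lemma pi_bl: "piQ W = map fst (bl W)"
proof -
  have "piQ W = piQ (lead W @ concat (map cr (bl W)))" by (rule arg_cong[OF decomp])
  then show ?thesis by (simp add: pi_allQ allQ_lead pi_concat_good goodbs_bl)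
qed

lemma length_bl: "length (bl W) \<le> length W"
proof -
  have "length (concat (map cr bs)) \<ge> length bs" for bs :: "(('a,'b) fsym \<times> _) list"
    by (induction bs) (auto simp: cr_def)
  then show ?thesis by (metis decomp le_add2 length_append order_trans)
qed




definition stepf :: "('a, 'q, 'g) vpa \<Rightarrow> ('q, 'g) conf \<Rightarrow> ('a,'q) fsym \<Rightarrow> ('q, 'g) conf" where
  "stepf A c s = (case s of FC a \<Rightarrow> delta A c [a] | FT \<tau> \<Rightarrow> (fst c, \<tau> (snd c)) | FQ q \<Rightarrow> c)"

definition hq :: "('a,'q) fsym list \<Rightarrow> 'q option" where
  "hq W = (case W of [] \<Rightarrow> None | s # _ \<Rightarrow> (case s of FQ q \<Rightarrow> Some q | _ \<Rightarrow> None))"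

definition stf :: "('a, 'q, 'g) vpa \<Rightarrow> 'q option \<Rightarrow> ('q, 'g) conf" where
  "stf A oq = (case oq of None \<Rightarrow> init_conf A | Some q \<Rightarrow> ([bot A], q))"

lemma foldl_stepf_allQ: "allQ r \<Longrightarrow> foldl (stepf A) c r = c"
  by (induction r arbitrary: c) (auto simp: stepf_def split: fsym.splits)

lemma foldl_stepf_pi: "foldl (stepf A) c W = foldl (stepf A) c (piQ W)"
  by (induction W arbitrary: c) (auto simp: stepf_def piQ_def split: fsym.splits)

lemma qwords_iff: "x \<in> qwords \<longleftrightarrow> allQ x"
proof
  assume "x \<in> qwords" then show "allQ x" by (auto simp: qwords_def allQ_def)
next
  assume a: "allQ x"
  have "x = map FQ (map unFQ x)" using a
    by (induction x) (auto elim: isQ.elims)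
  then show "x \<in> qwords" unfolding qwords_def by blast
qed

lemma is_fact_unique:
  assumes "is_fact A W f"
  shows "f = (lead W, map cr (bl W))"
proof -
  obtain s fs where f: "f = (s, fs)" by (cases f)
  have W: "W = s @ concat fs" and s: "allQ s" and fs: "set fs \<subseteq> flat_factor A"
    using assms by (auto simp: is_fact_def f qwords_iff)
  let ?bs = "map (\<lambda>l. (hd l, tl l)) fs"
  have ne: "\<forall>l\<in>set fs. l \<noteq> [] \<and> \<not> isQ (hd l) \<and> allQ (tl l)"
    using fs by (auto simp: flat_factor_def calls_f_def qwords_iff)
  have m: "map cr ?bs = fs" using ne by (induction fs) (auto simp: cr_def)
  have g: "goodbs ?bs" using ne by (auto simp: goodbs_def)
  have "W = s @ concat (map cr ?bs)" using W m by simp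
  then have "lead W = s" "bl W = ?bs" using uniq_decomp[OF s g] by simp_all
  then show ?thesis using f m by simp
qed

lemma tf_step_eq: "\<not> isQ s \<Longrightarrow> tf_step A c (s # r) = stepf A c s"
  by (cases s) (auto simp: stepf_def)

lemma foldl_tf_step:
  "goodbs bs \<Longrightarrow> foldl (tf_step A) c (map cr bs) = foldl (stepf A) c (concat (map cr bs))"
proof (induction bs arbitrary: c)
  case Nil then show ?case by simp
next
  case (Cons b bs)
  obtain s r where b: "b = (s, r)" by (cases b)
  from Cons.prems have s: "\<not> isQ s" and r: "allQ r" and g: "goodbs bs" by (auto simp: b)
  have "foldl (stepf A) c (concat (map cr (b # bs))) = foldl (stepf A) (foldl (stepf A) (stepf A c s) r) (concat (map cr bs))"
    by (simp add: b cr_def)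
  also have "\<dots> = foldl (stepf A) (stepf A c s) (concat (map cr bs))"
    by (simp add: foldl_stepf_allQ[OF r])
  also have "\<dots> = foldl (tf_step A) (stepf A c s) (map cr bs)"
    using Cons.IH[OF g] by simp
  also have "\<dots> = foldl (tf_step A) c (map cr (b # bs))"
    by (simp add: b cr_def tf_step_eq[OF s])
  finally show ?case by simp
qed

lemma nu_formula:
  assumes "W \<in> AllFlat A"
  shows "nu_f A W = rep A (foldl (stepf A) (stf A (hq W)) (piQ W))"
proof -
  obtain f where f: "is_fact A W f" using assms by (auto simp: AllFlat_def)
  have fe: "f = (lead W, map cr (bl W))" by (rule is_fact_unique[OF f])
  have th: "(THE f. is_fact A W f) = (lead W, map cr (bl W))"
    using f is_fact_unique[of A W] by (metis (no_types) fe the_equality)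
  let ?st = "if lead W = [] then init_conf A else ([bot A], unFQ (hd (lead W)))"
  have st: "?st = stf A (hq W)"
  proof (cases "lead W = []")
    case True
    have "W = concat (map cr (bl W))" using True by (metis append.left_neutral decomp)
    then have "hq W = None" using goodbs_bl[of W]
      by (cases "bl W") (auto simp: hq_def cr_def split: fsym.splits list.splits elim: isQ.elims)
    then show ?thesis using True by (simp add: stf_def)
  next
    case False
    then obtain q rest where "lead W = FQ q # rest" using allQ_lead[of W]
      by (cases "lead W") (auto elim: isQ.elims)
    moreover then have "hq W = Some q" by (subst decomp[of W]) (simp add: hq_def)
    ultimately show ?thesis by (simp add: stf_def)
  qed
  have "tf A W = foldl (tf_step A) ?st (map cr (bl W))"
    by (simp add: tf_def th tf_fact_def)
  also have "\<dots> = foldl (stepf A) ?st (concat (map cr (bl W)))"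
    by (rule foldl_tf_step[OF goodbs_bl])
  also have "\<dots> = foldl (stepf A) ?st W"
  proof -
    have "foldl (stepf A) ?st W = foldl (stepf A) ?st (lead W @ concat (map cr (bl W)))"
      by (rule arg_cong[OF decomp])
    then show ?thesis by (simp add: foldl_stepf_allQ[OF allQ_lead])
  qed
  also have "\<dots> = foldl (stepf A) (stf A (hq W)) (piQ W)"
    by (subst st) (rule foldl_stepf_pi)
  finally show ?thesis using assms by (simp add: nu_f_def)
qed

lemma hq_append: "a \<noteq> [] \<Longrightarrow> hq (a @ b) = hq a"
  by (cases a) (auto simp: hq_def)

lemma nu_eq:
  assumes "W \<in> AllFlat A" "W' \<in> AllFlat A" "hq W = hq W'" "piQ W = piQ W'"
  shows "nu_f A W = nu_f A W'"
  using assms nu_formula by metis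

lemma kstar_Nil[simp]: "[] \<in> kstar L"
  by (auto simp: kstar_def intro!: exI[of _ "[]"])

lemma kstar_single: "x \<in> L \<Longrightarrow> x \<in> kstar L"
  by (auto simp: kstar_def intro!: exI[of _ "[x]"])

lemma kstar_app: "x \<in> kstar L \<Longrightarrow> y \<in> kstar L \<Longrightarrow> x @ y \<in> kstar L"
proof -
  assume "x \<in> kstar L" "y \<in> kstar L"
  then obtain ws vs where "x = concat ws" "set ws \<subseteq> L" "y = concat vs" "set vs \<subseteq> L"
    by (auto simp: kstar_def)
  then have "x @ y = concat (ws @ vs) \<and> set (ws @ vs) \<subseteq> L" by simp
  then show ?thesis unfolding kstar_def by blast
qed

lemma kstar_concat: "set ws \<subseteq> kstar L \<Longrightarrow> concat ws \<in> kstar L"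
  by (induction ws) (auto intro: kstar_app)

lemma conc_iff: "w \<in> conc K L \<longleftrightarrow> (\<exists>u v. w = u @ v \<and> u \<in> K \<and> v \<in> L)"
  by (auto simp: conc_def)

lemma desc_app_wm: "d \<in> Desc A \<Longrightarrow> v \<in> WM A \<Longrightarrow> d @ v \<in> Desc A"
proof (induction rule: Desc.induct)
  case desc_eps
  then show ?case using Desc.desc_wm[OF desc_eps Desc.desc_eps] by simp
next
  case (desc_wm w v')
  then show ?case using Desc.desc_wm by fastforce
next
  case (desc_ret b v')
  then show ?case using Desc.desc_ret by fastforce
qed

lemma desc_app_ret: "d \<in> Desc A \<Longrightarrow> kind A b = Ret \<Longrightarrow> d @ [b] \<in> Desc A"
proof (induction rule: Desc.induct)
  case desc_eps
  then show ?case using Desc.desc_ret[OF desc_eps Desc.desc_eps] by simp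
next
  case (desc_wm w v')
  then show ?case using Desc.desc_wm by fastforce
next
  case (desc_ret b' v')
  then show ?case using Desc.desc_ret by fastforce
qed

lemma wm_desc: "w \<in> WM A \<Longrightarrow> w \<in> Desc A"
  using Desc.desc_wm[OF _ Desc.desc_eps] by fastforce

lemma wm_drop: "w \<in> WM A \<Longrightarrow> drop i w \<in> Desc A"
proof (induction arbitrary: i rule: WM.induct)
  case wm_eps then show ?case by (simp add: Desc.desc_eps)
next
  case (wm_int c)
  then show ?case by (cases i) (auto simp: Desc.desc_eps intro: wm_desc WM.wm_int)
next
  case (wm_cat u v)
  show ?case
  proof (cases "i < length u")
    case True
    then show ?thesis using desc_app_wm[OF wm_cat.IH(1)[of i] wm_cat.hyps(2)] by simp
  next
    case False
    then show ?thesis using wm_cat by simp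
  qed
next
  case (wm_nest a b w)
  show ?case
  proof (cases i)
    case 0
    then show ?thesis using wm_desc WM.wm_nest[OF wm_nest(1,2,3)] by simp
  next
    case (Suc j)
    show ?thesis
    proof (cases "j \<le> length w")
      case True
      then have "drop i (a # w @ [b]) = drop j w @ [b]" using Suc by simp
      then show ?thesis using desc_app_ret[OF wm_nest.IH wm_nest(2)] by simp
    next
      case False
      then show ?thesis using Suc by (simp add: Desc.desc_eps)
    qed
  qed
qed

lemma sigma0_drop: "sigma0 A (drop i w) = drop i (sigma0 A w)"
  by (rule nth_equalityI) (auto simp: sigma0_def add.commute)

lemma S1_shape: "FT \<tau> # x \<in> S1 A \<Longrightarrow> \<exists>w. w \<in> WM A \<and> x = map FQ (tl (sigma0 A w))"
  by (auto simp: S1_def sigma1_def)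

lemma lquot_allQ: "x \<in> lquot \<tau> (S1 A) \<Longrightarrow> allQ x"
  by (auto simp: lquot_def allQ_def dest!: S1_shape)

lemma lquot_suf: "x \<in> lquot \<tau> (S1 A) \<Longrightarrow> drop j x \<in> S0 A"
proof -
  assume "x \<in> lquot \<tau> (S1 A)"
  then obtain w where w: "w \<in> WM A" "x = map FQ (tl (sigma0 A w))"
    by (auto simp: lquot_def dest!: S1_shape)
  have "drop j x = map FQ (drop (Suc j) (sigma0 A w))" using w by (simp add: drop_map drop_Suc)
  also have "\<dots> = map FQ (sigma0 A (drop (Suc j) w))" by (simp add: sigma0_drop)
  finally show ?thesis using wm_drop[OF w(1)] by (auto simp: S0_def)
qed

lemma S0_allQ: "s \<in> S0 A \<Longrightarrow> allQ s"
  by (auto simp: S0_def allQ_def)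

lemma S1_in: "FT \<tau> # x \<in> S1 A \<Longrightarrow> x \<in> lquot \<tau> (S1 A)"
  by (simp add: lquot_def)

lemma Flat_AllFlat: "W \<in> Flat A \<Longrightarrow> W \<in> AllFlat A"
proof -
  assume "W \<in> Flat A"
  then obtain s ws where W: "W = s @ concat ws" "s \<in> S0 A" "set ws \<subseteq> calls_f A \<union> S1 A"
    by (auto simp: Flat_def conc_def kstar_def)
  have "set ws \<subseteq> flat_factor A"
  proof
    fix l assume "l \<in> set ws"
    then have "l \<in> calls_f A \<or> l \<in> S1 A" using W by auto
    then show "l \<in> flat_factor A"
    proof
      assume "l \<in> S1 A"
      then obtain w where "l = sigma1 A w" by (auto simp: S1_def)
      then show ?thesis by (auto simp: flat_factor_def sigma1_def qwords_def)
    qed (auto simp: flat_factor_def)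
  qed
  then have "is_fact A W (s, ws)" using W S0_allQ[of s A] by (simp add: is_fact_def qwords_iff)
  then show ?thesis by (auto simp: AllFlat_def)
qed




lemma pi_simps: "piQ [] = []" "piQ (s # w) = (if isQ s then piQ w else s # piQ w)"
  by (simp_all add: piQ_def)

lemma map_bl: "xs \<noteq> [] \<Longrightarrow> map f xs = map f (butlast xs) @ [f (last xs)]"
  by (induction xs) auto

lemma hq_same: "a \<noteq> [] \<Longrightarrow> b \<noteq> [] \<Longrightarrow> hd a = hd b \<Longrightarrow> hq a = hq b"
  by (cases a; cases b) (auto simp: hq_def)

lemma hq_nonQ: "w \<noteq> [] \<Longrightarrow> \<not> isQ (hd w) \<Longrightarrow> hq w = None"
  by (cases w) (auto simp: hq_def split: fsym.splits)

lemma Nil_S0: "[] \<in> S0 A"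
proof -
  have "[] \<in> Desc A" by (rule Desc.desc_eps)
  moreover have "map FQ (sigma0 A []) = []" by (simp add: sigma0_def)
  ultimately show ?thesis unfolding S0_def by (metis image_eqI)
qed

locale ctx =
  fixes A :: "('a::finite, 'q::{finite,linorder}, 'g::{finite,linorder}) vpa"
    and R :: "('q \<Rightarrow> 'q) \<Rightarrow> ('a, 'q) fsym list set"
  assumes ov: "\<And>\<tau>. bounded_overapprox (lquot \<tau> (S1 A)) (R \<tau>)"
begin

lemma R_letters:
  assumes "y \<in> R \<tau>" "i < length y"
  shows "\<exists>x\<in>lquot \<tau> (S1 A). \<exists>j<length x. x ! j = y ! i \<and> length x - j = length y - i"
proof -
  have "(y ! i, length y - i) \<in> Psi (R \<tau>)" unfolding Psi_def Psi_w_def using assms by blast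
  then have "(y ! i, length y - i) \<in> Psi (lquot \<tau> (S1 A))" using ov[of \<tau>] by (simp add: bounded_overapprox_def)
  then show ?thesis unfolding Psi_def Psi_w_def by fastforce
qed

lemma R_allQ: "y \<in> R \<tau> \<Longrightarrow> allQ y"
  unfolding allQ_def
proof
  fix s assume y: "y \<in> R \<tau>" and s: "s \<in> set y"
  then obtain i where i: "i < length y" "s = y ! i" by (metis in_set_conv_nth)
  then obtain x j where "x \<in> lquot \<tau> (S1 A)" "j < length x" "x ! j = s"
    using R_letters[OF y i(1)] by auto
  then show "isQ s" using lquot_allQ[of x \<tau> A] by (auto simp: allQ_def)
qed

lemma R_len: "y \<in> R \<tau> \<Longrightarrow> \<exists>x\<in>lquot \<tau> (S1 A). length x = length y"
proof -
  assume "y \<in> R \<tau>"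
  then have "length y \<in> length ` R \<tau>" by simp
  then have "length y \<in> length ` lquot \<tau> (S1 A)" using ov[of \<tau>] by (simp add: bounded_overapprox_def)
  then show ?thesis by auto
qed

lemma R_suffix:
  assumes "r @ l \<in> R \<tau>" "l \<noteq> []"
  shows "\<exists>P x'. P \<in> S0 A \<and> x' @ P \<in> lquot \<tau> (S1 A) \<and> length P = length l \<and> hd P = hd l"
proof -
  have i: "length r < length (r @ l)" using assms(2) by simp
  obtain x j where x: "x \<in> lquot \<tau> (S1 A)" "j < length x" "x ! j = (r @ l) ! length r"
    "length x - j = length (r @ l) - length r"
    using R_letters[OF assms(1) i] by blast
  have "(r @ l) ! length r = hd l" using assms(2) by (simp add: hd_conv_nth nth_append)
  then have "P \<in> S0 A \<and> x' @ P \<in> lquot \<tau> (S1 A) \<and> length P = length l \<and> hd P = hd l"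
    if "P = drop j x" "x' = take j x" for P x'
    using that x lquot_suf[OF x(1)] by (auto simp: hd_drop_conv_nth)
  then show ?thesis by blast
qed

definition okR :: "('a,'q) fsym \<Rightarrow> ('a,'q) fsym list \<Rightarrow> bool" where
  "okR c r = (case c of FC a \<Rightarrow> kind A a = Call \<and> r = [] | FT \<tau> \<Rightarrow> r \<in> R \<tau> | FQ q \<Rightarrow> False)"

definition GoodR :: "('a,'q) fsym list \<Rightarrow> bool" where
  "GoodR W \<longleftrightarrow> lead W \<in> (\<Union>\<tau>. Suf (R \<tau>)) \<and> (\<forall>b\<in>set (bl W). okR (fst b) (snd b))"

lemma RegFlat_parse:
  assumes "W \<in> RegFlat A R"
  shows "GoodR W \<and> W \<in> AllFlat A"
proof -
  obtain r0 ws where W: "W = r0 @ concat ws" and r0: "r0 \<in> (\<Union>\<tau>. Suf (R \<tau>))"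
    and ws: "set ws \<subseteq> calls_f A \<union> (\<Union>\<tau>. (\<lambda>x. FT \<tau> # x) ` R \<tau>)"
    using assms by (auto simp: RegFlat_def conc_def kstar_def)
  have r0Q: "allQ r0" using r0 by (auto simp: Suf_def dest!: R_allQ)
  have wsf: "\<forall>l\<in>set ws. (\<exists>a. l = [FC a] \<and> kind A a = Call) \<or> (\<exists>\<tau> y. l = FT \<tau> # y \<and> y \<in> R \<tau>)"
    using ws by (auto simp: calls_f_def)
  let ?bs = "map (\<lambda>l. (hd l, tl l)) ws"
  have ne: "\<forall>l\<in>set ws. l \<noteq> [] \<and> \<not> isQ (hd l) \<and> allQ (tl l)"
    using wsf R_allQ by fastforce
  have m: "map cr ?bs = ws" using ne by (induction ws) (auto simp: cr_def)
  have g: "goodbs ?bs" using ne by (auto simp: goodbs_def)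
  have "W = r0 @ concat (map cr ?bs)" using W m by simp
  then have lw: "lead W = r0" "bl W = ?bs" using uniq_decomp[OF r0Q g] by simp_all
  have ok: "\<forall>b\<in>set (bl W). okR (fst b) (snd b)"
    using wsf by (auto simp: lw okR_def)
  have ff: "set ws \<subseteq> flat_factor A"
    using wsf R_allQ by (fastforce simp: flat_factor_def calls_f_def qwords_iff)
  have "is_fact A W (r0, ws)" using W r0Q ff by (simp add: is_fact_def qwords_iff)
  then show ?thesis using ok r0 lw by (auto simp: GoodR_def AllFlat_def)
qed

definition Xs :: "('q \<Rightarrow> 'q) \<Rightarrow> ('a,'q) fsym list" where
  "Xs \<tau> = (SOME x. x \<in> lquot \<tau> (S1 A))"

definition rend :: "('a,'q) fsym \<times> ('a,'q) fsym list \<Rightarrow> ('a,'q) fsym list" where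
  "rend b = (case fst b of FC a \<Rightarrow> [FC a] | FT \<tau> \<Rightarrow> FT \<tau> # Xs \<tau> | FQ q \<Rightarrow> [])"

definition rendL :: "('a,'q) fsym \<times> ('a,'q) fsym list \<Rightarrow> ('a,'q) fsym list" where
  "rendL b = (case fst b of FC a \<Rightarrow> [FC a]
      | FT \<tau> \<Rightarrow> FT \<tau> # (SOME x. x \<in> lquot \<tau> (S1 A) \<and> length x = length (snd b)) | FQ q \<Rightarrow> [])"

abbreviation FF where "FF \<equiv> calls_f A \<union> S1 A"

lemma pi_FC: "piQ [FC a] = [FC a]" by (simp add: piQ_def)

lemma rend_ok:
  assumes "okR c r"
  shows "rend (c, r) \<in> FF \<and> piQ (rend (c, r)) = [c] \<and> (\<exists>t. rend (c, r) = c # t)"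
proof (cases c)
  case (FC a)
  then show ?thesis using assms by (auto simp: rend_def okR_def calls_f_def pi_FC)
next
  case (FT \<tau>)
  then have "r \<in> R \<tau>" using assms by (simp add: okR_def)
  then obtain x where "x \<in> lquot \<tau> (S1 A)" using R_len by blast
  then have xs: "Xs \<tau> \<in> lquot \<tau> (S1 A)" unfolding Xs_def by (rule someI)
  then have "FT \<tau> # Xs \<tau> \<in> S1 A" by (simp add: lquot_def)
  moreover have "piQ (FT \<tau> # Xs \<tau>) = [FT \<tau>]" using lquot_allQ[OF xs] pi_allQ by (simp add: piQ_def)
  ultimately show ?thesis using FT by (simp add: rend_def)
next
  case (FQ q) then show ?thesis using assms by (simp add: okR_def)
qed

lemma rendL_ok:
  assumes "okR c r"
  shows "rendL (c, r) \<in> FF \<and> piQ (rendL (c, r)) = [c] \<and> (\<exists>t. rendL (c, r) = c # t)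
         \<and> length (rendL (c, r)) = Suc (length r)"
proof (cases c)
  case (FC a)
  then show ?thesis using assms by (auto simp: rendL_def okR_def calls_f_def pi_FC)
next
  case (FT \<tau>)
  then have "r \<in> R \<tau>" using assms by (simp add: okR_def)
  then obtain x where "x \<in> lquot \<tau> (S1 A) \<and> length x = length r" using R_len by blast
  then have xs: "(SOME x. x \<in> lquot \<tau> (S1 A) \<and> length x = length r) \<in> lquot \<tau> (S1 A)
     \<and> length (SOME x. x \<in> lquot \<tau> (S1 A) \<and> length x = length r) = length r" by (rule someI)
  let ?x = "(SOME x. x \<in> lquot \<tau> (S1 A) \<and> length x = length r)"
  have "FT \<tau> # ?x \<in> S1 A" using xs by (simp add: lquot_def)
  moreover have "piQ (FT \<tau> # ?x) = [FT \<tau>]" using lquot_allQ xs pi_allQ by (simp add: piQ_def) blast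
  ultimately show ?thesis using FT xs by (simp add: rendL_def)
next
  case (FQ q) then show ?thesis using assms by (simp add: okR_def)
qed

lemma rend_list:
  assumes "\<forall>b\<in>set bs. okR (fst b) (snd b)"
  shows "concat (map rend bs) \<in> kstar FF \<and> piQ (concat (map rend bs)) = map fst bs"
  using assms
proof (induction bs)
  case Nil then show ?case by (simp add: piQ_def)
next
  case (Cons b bs)
  then have "okR (fst b) (snd b)" by simp
  then have "rend b \<in> FF" "piQ (rend b) = [fst b]" using rend_ok[of "fst b" "snd b"] by simp_all
  then show ?case using Cons by (auto intro: kstar_app kstar_single)
qed

lemma rendL_list:
  assumes "\<forall>b\<in>set bs. okR (fst b) (snd b)"
  shows "concat (map rendL bs) \<in> kstar FF \<and> piQ (concat (map rendL bs)) = map fst bs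
     \<and> length (concat (map rendL bs)) = length (concat (map cr bs))
     \<and> (bs \<noteq> [] \<longrightarrow> concat (map rendL bs) \<noteq> [] \<and> hd (concat (map rendL bs)) = fst (hd bs))"
  using assms
proof (induction bs)
  case Nil then show ?case by (simp add: piQ_def)
next
  case (Cons b bs)
  then have "okR (fst b) (snd b)" by simp
  then have "rendL b \<in> FF" "piQ (rendL b) = [fst b]" "\<exists>t. rendL b = fst b # t"
     "length (rendL b) = Suc (length (snd b))" using rendL_ok[of "fst b" "snd b"] by simp_all
  then show ?case using Cons by (auto intro: kstar_app kstar_single simp: cr_def)
qed

definition gz :: "('a,'q) fsym list \<Rightarrow> ('a,'q) fsym list" where
  "gz z = concat (map rend (bl z))"

lemma side:
  assumes u2: "u2 \<noteq> []" and x: "bl x \<noteq> []" and G1: "GoodR (u2 @ z0)"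
    and G2: "GoodR (u2 @ x @ u2 @ z0)"
  shows "\<exists>P B X'. P \<in> S0 A \<and> B \<in> kstar FF \<and> X' @ P \<in> kstar FF \<and> piQ X' = piQ x
    \<and> piQ (P @ B) = piQ u2 \<and> hq (P @ B) = hq u2 \<and> length (P @ B) = length u2 + length (lead z0)
    \<and> P @ B \<noteq> []"
proof -
  define L where "L = lead (u2 @ z0)"
  obtain pre where bl2: "bl (u2 @ x @ (u2 @ z0)) = pre @ butlast (bl x) @
      [(fst (last (bl x)), snd (last (bl x)) @ L)] @ bl (u2 @ z0)"
    using concat4[OF x] unfolding L_def by blast
  have okb: "\<forall>b\<in>set (butlast (bl x)). okR (fst b) (snd b)"
    and okl: "okR (fst (last (bl x))) (snd (last (bl x)) @ L)"
    using G2 bl2 by (auto simp: GoodR_def)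
  have bx: "bl x = butlast (bl x) @ [last (bl x)]" using x by simp
  have XP: "\<exists>P X'. P \<in> S0 A \<and> X' @ P \<in> kstar FF \<and> piQ X' = piQ x \<and> length P = length L
      \<and> (L \<noteq> [] \<longrightarrow> hd P = hd L)"
  proof (cases "L = []")
    case True
    have ok: "\<forall>b\<in>set (bl x). okR (fst b) (snd b)"
      using okb okl True bx by (metis Un_iff append_Nil2 empty_iff empty_set list.set(2) set_append singleton_iff)
    have "concat (map rend (bl x)) @ [] \<in> kstar FF" "piQ (concat (map rend (bl x))) = piQ x"
      using rend_list[OF ok] pi_bl[of x] by simp_all
    then show ?thesis using True Nil_S0 by fastforce
  next
    case False
    obtain c r where cl: "last (bl x) = (c, r)" by (cases "last (bl x)")
    have okl': "okR c (r @ L)" using okl cl by simp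
    then obtain \<tau> where c: "c = FT \<tau>" and rR: "r @ L \<in> R \<tau>" using False
      by (cases c) (auto simp: okR_def)
    obtain P x' where P: "P \<in> S0 A" "x' @ P \<in> lquot \<tau> (S1 A)" "length P = length L" "hd P = hd L"
      using R_suffix[OF rR False] by blast
    define X' where "X' = concat (map rend (butlast (bl x))) @ [FT \<tau>] @ x'"
    have "X' @ P = concat (map rend (butlast (bl x))) @ (FT \<tau> # (x' @ P))" by (simp add: X'_def)
    moreover have "FT \<tau> # (x' @ P) \<in> FF" using P(2) by (simp add: lquot_def)
    ultimately have "X' @ P \<in> kstar FF" using rend_list[OF okb] by (auto intro: kstar_app kstar_single)
    moreover have "piQ X' = piQ x"
    proof -
      have "allQ x'" using lquot_allQ[OF P(2)] by simp
      then have "piQ X' = map fst (butlast (bl x)) @ [FT \<tau>]"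
        using rend_list[OF okb] pi_allQ[of x'] by (simp add: X'_def pi_simps)
      also have "\<dots> = map fst (bl x)" using map_bl[OF x, of fst] cl c by simp
      finally show ?thesis using pi_bl[of x] by simp
    qed
    ultimately show ?thesis using P by blast
  qed
  then obtain P X' where PX: "P \<in> S0 A" "X' @ P \<in> kstar FF" "piQ X' = piQ x" "length P = length L"
    "L \<noteq> [] \<Longrightarrow> hd P = hd L" by blast
  have PQ: "allQ P" using S0_allQ[OF PX(1)] .
  show ?thesis
  proof (cases "bl u2 = []")
    case True
    have L: "L = u2 @ lead z0" using concat1[OF True] by (simp add: L_def)
    have "piQ P = piQ u2" using PQ bl_Nil_allQ[OF True] by (simp add: pi_allQ)
    moreover have "hq P = hq u2" using PX(4,5) L u2 by (intro hq_same) auto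
    moreover have "length P = length u2 + length (lead z0)" using PX(4) L by simp
    ultimately show ?thesis using PX u2 by (intro exI[of _ P] exI[of _ "[]"] exI[of _ X']) auto
  next
    case False
    have L: "L = lead u2" using concat2(1)[OF False] by (simp add: L_def)
    define bs' where "bs' = butlast (bl u2) @ [(fst (last (bl u2)), snd (last (bl u2)) @ lead z0)]"
    have blz: "bl (u2 @ z0) = bs' @ bl z0" using concat2(2)[OF False] by (simp add: bs'_def)
    have okbs: "\<forall>b\<in>set bs'. okR (fst b) (snd b)" using G1 blz by (auto simp: GoodR_def)
    define B where "B = concat (map rendL bs')"
    have bs'ne: "bs' \<noteq> []" by (simp add: bs'_def)
    have B: "B \<in> kstar FF" "piQ B = map fst bs'" "length B = length (concat (map cr bs'))"
       "B \<noteq> []" "hd B = fst (hd bs')"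
      using rendL_list[OF okbs] bs'ne by (simp_all add: B_def)
    have bu: "bl u2 = butlast (bl u2) @ [last (bl u2)]" using False by simp
    have mf: "map fst bs' = map fst (bl u2)" using map_bl[OF False, of fst] by (simp add: bs'_def)
    have e: "length (concat (map cr (bl u2))) = length (concat (map cr (butlast (bl u2)))) + Suc (length (snd (last (bl u2))))"
      using map_bl[OF False, of cr] by (simp add: cr_def)
    have lc: "length (concat (map cr bs')) = length (concat (map cr (bl u2))) + length (lead z0)"
      unfolding bs'_def e by (simp add: cr_def)
    have pib: "piQ (P @ B) = piQ u2" using B(2) mf pi_bl[of u2] PQ by (simp add: pi_allQ)
    have lu: "length u2 = length (lead u2 @ concat (map cr (bl u2)))" by (rule arg_cong[OF decomp])
    have lenb: "length (P @ B) = length u2 + length (lead z0)"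
      using PX(4) L B(3) lc lu by simp
    have hqb: "hq (P @ B) = hq u2"
    proof (cases "lead u2 = []")
      case True
      then have P0: "P = []" using PX(4) L by simp
      have fh: "fst (hd bs') = fst (hd (bl u2))" using mf bs'ne False by (metis hd_map)
      have nq: "\<not> isQ (fst (hd (bl u2)))" using goodbs_bl[of u2] False by (auto simp: goodbs_def)
      have u2e: "u2 = concat (map cr (bl u2))" using True by (metis append.left_neutral decomp)
      have "hd u2 = fst (hd (bl u2))"
      proof -
        obtain b bs where "bl u2 = b # bs" using False by (cases "bl u2") auto
        then show ?thesis using u2e by (simp add: cr_def)
      qed
      then have "hq u2 = None" using hq_nonQ[OF assms(1)] nq by simp
      moreover have "hq (P @ B) = None"
      proof -
        have "\<not> isQ (hd B)" using B(5) fh nq by simp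
        then have "hq B = None" using hq_nonQ[OF B(4)] by simp
        then show ?thesis using P0 by simp
      qed
      ultimately show ?thesis by simp
    next
      case False
      then have "P \<noteq> []" "hd P = hd (lead u2)" using PX(4,5) L by auto
      moreover have "hd (lead u2) = hd u2" using False decomp[of u2] by (metis hd_append2)
      ultimately show ?thesis using hq_append hq_same u2 by metis
    qed
    show ?thesis using PX B pib lenb hqb by (intro exI[of _ P] exI[of _ B] exI[of _ X']) auto
  qed
qed

end



definition FactN :: "'b list set \<Rightarrow> nat \<Rightarrow> 'b list set" where
  "FactN L N = {f. length f = N \<and> (\<exists>a b. a @ f @ b \<in> L)}"

definition pw :: "'b list \<Rightarrow> 'b list set" where
  "pw w = {concat (replicate n w) | n. True}"

lemma rep_nth: "i < n * length w \<Longrightarrow> concat (replicate n w) ! i = w ! (i mod length w)"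
proof (induction n arbitrary: i)
  case 0 then show ?case by simp
next
  case (Suc n)
  show ?case
  proof (cases "i < length w")
    case True then show ?thesis by (simp add: nth_append)
  next
    case False
    then have "concat (replicate (Suc n) w) ! i = concat (replicate n w) ! (i - length w)"
      by (simp add: nth_append)
    also have "\<dots> = w ! ((i - length w) mod length w)" using Suc False by (intro Suc.IH) auto
    also have "(i - length w) mod length w = i mod length w" using False by (simp add: le_mod_geq)
    finally show ?thesis .
  qed
qed

lemma letters_Fact: "f \<in> FactN L N \<Longrightarrow> (\<forall>s\<in>L. set s \<subseteq> S) \<Longrightarrow> set f \<subseteq> S"
  by (auto simp: FactN_def) (metis Un_iff set_append subsetD)

lemma finite_Fact: "finite S \<Longrightarrow> (\<forall>s\<in>L. set s \<subseteq> S) \<Longrightarrow> finite (FactN L N)"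
proof -
  assume fS: "finite S" and L: "\<forall>s\<in>L. set s \<subseteq> S"
  have "FactN L N \<subseteq> {xs. set xs \<subseteq> S \<and> length xs = N}"
    using letters_Fact[OF _ L] by (auto simp: FactN_def)
  then show ?thesis using finite_lists_length_eq[OF fS] finite_subset by blast
qed

lemma pw_letters: "\<forall>s\<in>pw w. set s \<subseteq> set w"
  by (auto simp: pw_def)

lemma star_prod_letters: "\<forall>s\<in>star_prod ws. set s \<subseteq> set (concat ws)"
  by (induction ws) (simp, fastforce)

lemma pw_fact_sub:
  "FactN (pw w) N \<subseteq> {[]} \<union> (\<lambda>r. map (\<lambda>j. w ! ((r + j) mod length w)) [0..<N]) ` {..<length w}"
proof
  fix f assume "f \<in> FactN (pw w) N"
  then obtain a b n where f: "length f = N" "a @ f @ b = concat (replicate n w)"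
    by (auto simp: FactN_def pw_def)
  show "f \<in> {[]} \<union> (\<lambda>r. map (\<lambda>j. w ! ((r + j) mod length w)) [0..<N]) ` {..<length w}"
  proof (cases "N = 0")
    case True then show ?thesis using f by simp
  next
    case False
    then have wne: "w \<noteq> []" using f by (cases w) auto
    have len: "length (concat (replicate n w)) = n * length w" by (simp add: length_concat sum_list_replicate)
    have "f = map (\<lambda>j. w ! ((length a mod length w + j) mod length w)) [0..<N]"
    proof (rule nth_equalityI)
      show "length f = length (map (\<lambda>j. w ! ((length a mod length w + j) mod length w)) [0..<N])"
        using f by simp
    next
      fix j assume j: "j < length f"
      have "f ! j = (a @ f @ b) ! (length a + j)" using j by (simp add: nth_append)
      also have "\<dots> = w ! ((length a + j) mod length w)"
      proof -
        have "length (a @ f @ b) = n * length w" using f(2) len by simp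
        then have lt: "length a + j < n * length w" using j by simp
        show ?thesis using rep_nth[OF lt] f(2) by simp
      qed
      also have "(length a + j) mod length w = (length a mod length w + j) mod length w"
        by (simp add: mod_add_left_eq)
      finally show "f ! j = map (\<lambda>j. w ! ((length a mod length w + j) mod length w)) [0..<N] ! j"
        using j f by simp
    qed
    moreover have "length a mod length w < length w" using wne by simp
    ultimately show ?thesis by blast
  qed
qed

lemma pw_fact_card: "finite (FactN (pw w) N) \<and> card (FactN (pw w) N) \<le> Suc (length w)"
proof -
  have fin: "finite (FactN (pw w) N)" using finite_Fact[OF finite_set pw_letters] .
  have "card (FactN (pw w) N) \<le> card ({[]} \<union> (\<lambda>r. map (\<lambda>j. w ! ((r + j) mod length w)) [0..<N]) ` {..<length w})"
    using pw_fact_sub[of w N] by (intro card_mono) auto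
  also have "\<dots> \<le> card {[]::'a list} + card ((\<lambda>r. map (\<lambda>j. w ! ((r + j) mod length w)) [0..<N]) ` {..<length w})"
    by (rule card_Un_le)
  also have "\<dots> \<le> 1 + length w" using card_image_le[of "{..<length w}"] by simp
  finally show ?thesis using fin by simp
qed

lemma Nil_pw: "[] \<in> pw w"
proof -
  have "[] = concat (replicate 0 w)" by simp
  then show ?thesis unfolding pw_def by blast
qed

lemma fact_split:
  assumes "f \<in> FactN (star_prod (w # ws)) N"
  shows "\<exists>j\<le>N. \<exists>s p. f = s @ p \<and> s \<in> FactN (pw w) j \<and> p \<in> FactN (star_prod ws) (N - j)"
proof -
  obtain a b n v where f: "length f = N" "a @ f @ b = concat (replicate n w) @ v" "v \<in> star_prod ws"
    using assms by (auto simp: FactN_def)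
  let ?X = "concat (replicate n w)"
  have Xp: "?X \<in> pw w" by (auto simp: pw_def)
  from f(2) consider (c1) us where "a = ?X @ us" "us @ f @ b = v" | (c2) us where "a @ us = ?X" "f @ b = us @ v"
    by (auto simp: append_eq_append_conv2)
  then show ?thesis
  proof cases
    case c1
    have e1: "[] @ [] @ [] \<in> pw w" using Nil_pw by simp
    have h1: "[] \<in> FactN (pw w) 0" using e1 unfolding FactN_def by blast
    have h2: "f \<in> FactN (star_prod ws) N" using c1 f unfolding FactN_def by blast
    show ?thesis using h1 h2 by (intro exI[of _ 0]) force
  next
    case c2
    from c2(2) consider (d1) us' where "f = us @ us'" "us' @ b = v" | (d2) us' where "f @ us' = us" "b = us' @ v"
      by (auto simp: append_eq_append_conv2)
    then show ?thesis
    proof cases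
      case d1
      have e1: "a @ us @ [] \<in> pw w" using c2(1) Xp by simp
      have h1: "us \<in> FactN (pw w) (length us)" using e1 unfolding FactN_def by blast
      have e2: "[] @ us' @ b \<in> star_prod ws" using d1 f by simp
      have l2: "length us' = N - length us" using d1 f by simp
      have h2: "us' \<in> FactN (star_prod ws) (N - length us)" using e2 l2 unfolding FactN_def by blast
      have "length us \<le> N" using d1 f by simp
      then show ?thesis using d1 h1 h2 by blast
    next
      case d2
      have e1: "a @ f @ us' \<in> pw w" using c2(1) d2 Xp by (metis append.assoc)
      have h1: "f \<in> FactN (pw w) N" using e1 f unfolding FactN_def by blast
      have e2: "[] @ [] @ v \<in> star_prod ws" using f(3) by simp
      have h2: "[] \<in> FactN (star_prod ws) 0" using e2 unfolding FactN_def by blast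
      show ?thesis using h1 h2 by (intro exI[of _ N]) force
    qed
  qed
qed

lemma fact_bound: "\<exists>K. \<forall>N. finite (FactN (star_prod ws) N) \<and> card (FactN (star_prod ws) N) \<le> K * (N+1)^(length ws)"
proof (induction ws)
  case Nil
  have "finite (FactN (star_prod []) N) \<and> card (FactN (star_prod []) N) \<le> 1 * (N+1)^0" for N :: nat
  proof -
    have s: "FactN (star_prod []) N \<subseteq> {[]}" by (auto simp: FactN_def)
    have "card (FactN (star_prod []) N) \<le> card {[]}" using card_mono[OF _ s] by simp
    then show ?thesis using finite_subset[OF s] by simp
  qed
  then show ?case by (intro exI[of _ 1] allI) simp
next
  case (Cons w ws)
  then obtain K where K: "\<And>N. finite (FactN (star_prod ws) N) \<and> card (FactN (star_prod ws) N) \<le> K * (N+1)^(length ws)"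
    by blast
  let ?C = "Suc (length w)"
  let ?m = "length ws"
  have "finite (FactN (star_prod (w # ws)) N) \<and> card (FactN (star_prod (w # ws)) N) \<le> (?C * K) * (N+1)^(length (w # ws))" for N
  proof -
    let ?U = "\<Union>j\<in>{..N}. (\<lambda>(s,p). s @ p) ` (FactN (pw w) j \<times> FactN (star_prod ws) (N - j))"
    have sub: "FactN (star_prod (w # ws)) N \<subseteq> ?U"
    proof
      fix f assume "f \<in> FactN (star_prod (w # ws)) N"
      then obtain j s p where "j \<le> N" "f = s @ p" "s \<in> FactN (pw w) j" "p \<in> FactN (star_prod ws) (N - j)"
        using fact_split by blast
      then show "f \<in> ?U" by auto
    qed
    have finU: "finite ?U"
      by (intro finite_UN_I finite_imageI finite_cartesian_product finite_atMost) (use pw_fact_card K in blast)+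
    have "card (FactN (star_prod (w # ws)) N) \<le> card ?U" by (rule card_mono[OF finU sub])
    also have "\<dots> \<le> (\<Sum>j\<in>{..N}. card ((\<lambda>(s,p). s @ p) ` (FactN (pw w) j \<times> FactN (star_prod ws) (N - j))))"
      by (rule card_UN_le) simp
    also have "\<dots> \<le> (\<Sum>j\<in>{..N}. ?C * (K * (N+1)^?m))"
    proof (rule sum_mono)
      fix j assume j: "j \<in> {..N}"
      have "card ((\<lambda>(s,p). s @ p) ` (FactN (pw w) j \<times> FactN (star_prod ws) (N - j)))
          \<le> card (FactN (pw w) j \<times> FactN (star_prod ws) (N - j))" by (intro card_image_le finite_cartesian_product) (use pw_fact_card K in blast)+
      also have "\<dots> = card (FactN (pw w) j) * card (FactN (star_prod ws) (N - j))" by (rule card_cartesian_product)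
      also have "\<dots> \<le> ?C * (K * (N - j + 1)^?m)" using pw_fact_card K by (intro mult_mono) auto
      also have "\<dots> \<le> ?C * (K * (N + 1)^?m)" by (intro mult_mono power_mono) auto
      finally show "card ((\<lambda>(s,p). s @ p) ` (FactN (pw w) j \<times> FactN (star_prod ws) (N - j))) \<le> ?C * (K * (N+1)^?m)" .
    qed
    also have "\<dots> = (N+1) * (?C * (K * (N+1)^?m))" by simp
    also have "\<dots> = (?C * K) * (N+1)^(length (w # ws))" by (simp add: algebra_simps)
    finally show ?thesis using finite_subset[OF sub finU] by simp
  qed
  then show ?case by blast
qed

lemma concat_blocks_inj:
  assumes "p \<noteq> q" "length p = length q"
  shows "length bs = length bs' \<Longrightarrow> concat (map (\<lambda>b. if b then p else q) bs) = concat (map (\<lambda>b. if b then p else q) bs') \<Longrightarrow> bs = bs'"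
proof (induction bs arbitrary: bs')
  case Nil then show ?case by simp
next
  case (Cons b bs)
  then obtain b' bs'' where bs': "bs' = b' # bs''" by (cases bs') auto
  let ?f = "\<lambda>b. if b then p else q"
  have l: "length (?f b) = length (?f b')" using assms(2) by simp
  have "?f b @ concat (map ?f bs) = ?f b' @ concat (map ?f bs'')" using Cons.prems bs' by simp
  then have "?f b = ?f b'" "concat (map ?f bs) = concat (map ?f bs'')" using l by (auto simp: append_eq_append_conv)
  then have "b = b'" using assms(1) by (cases b; cases b') auto
  moreover have "bs = bs''" using Cons.IH[of bs''] Cons.prems bs' \<open>concat (map ?f bs) = concat (map ?f bs'')\<close> by simp
  ultimately show ?case using bs' by simp
qed

lemma arith_exp: "\<exists>k::nat. KK * (c + k * L + 1) ^ M < 2 ^ k"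
proof -
  define D where "D = c + 1 + L * (M + 1)"
  define s where "s = KK * D ^ M + 1"
  define k where "k = (M + 1) * s"
  have s1: "s \<ge> 1" by (simp add: s_def)
  have "c + k * L + 1 \<le> D * s"
  proof -
    have "c + k * L + 1 = (c + 1) + L * (M + 1) * s" by (simp add: k_def algebra_simps)
    also have "\<dots> \<le> (c + 1) * s + L * (M + 1) * s" using s1 mult_le_mono2[of 1 s "c + 1"] by simp
    also have "\<dots> = D * s" by (simp add: D_def algebra_simps)
    finally show ?thesis .
  qed
  then have "KK * (c + k * L + 1) ^ M \<le> KK * (D * s) ^ M" by (intro mult_left_mono power_mono) auto
  also have "\<dots> = (KK * D ^ M) * s ^ M" by (simp add: power_mult_distrib)
  also have "\<dots> < s * s ^ M"
  proof -
    have "s ^ M > 0" using s1 by simp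
    then show ?thesis by (simp add: s_def)
  qed
  also have "\<dots> = s ^ (M + 1)" by simp
  also have "\<dots> < (2 ^ s) ^ (M + 1)" by (rule power_strict_mono) (auto intro: less_exp)
  also have "\<dots> = 2 ^ k" unfolding k_def by (metis mult.commute power_mult)
  finally show ?thesis by blast
qed

lemma bounded_contra:
  fixes T :: "'t set" and WS :: "'t \<Rightarrow> 'b list list"
  assumes fin: "finite T"
    and H: "\<And>w. w \<in> kstar {u, v} \<Longrightarrow> \<exists>\<tau>\<in>T. \<exists>a b. a @ u2 @ w @ b \<in> star_prod (WS \<tau>)"
    and nc: "u @ v \<noteq> v @ u"
  shows False
proof -
  have "\<forall>\<tau>. \<exists>K. \<forall>N. finite (FactN (star_prod (WS \<tau>)) N) \<and> card (FactN (star_prod (WS \<tau>)) N) \<le> K * (N+1)^(length (WS \<tau>))"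
    using fact_bound by blast
  then obtain Kf where Kf: "\<And>\<tau> N. finite (FactN (star_prod (WS \<tau>)) N) \<and> card (FactN (star_prod (WS \<tau>)) N) \<le> Kf \<tau> * (N+1)^(length (WS \<tau>))"
    by metis
  define KK where "KK = (\<Sum>\<tau>\<in>T. Kf \<tau>)"
  define M where "M = Max (insert 0 ((\<lambda>\<tau>. length (WS \<tau>)) ` T))"
  define L where "L = length u + length v"
  obtain k where k: "KK * (length u2 + k * L + 1) ^ M < 2 ^ k" using arith_exp by blast
  define N where "N = length u2 + k * L"
  let ?f = "\<lambda>b. if b then u @ v else v @ u"
  let ?Bs = "{bs :: bool list. set bs \<subseteq> UNIV \<and> length bs = k}"
  let ?g = "\<lambda>bs. u2 @ concat (map ?f bs)"
  have cardB: "card ?Bs = 2 ^ k" using card_lists_length_eq[of "UNIV :: bool set" k] by simp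
  have inj: "inj_on ?g ?Bs"
  proof (rule inj_onI)
    fix bs bs' assume "bs \<in> ?Bs" "bs' \<in> ?Bs" "?g bs = ?g bs'"
    then show "bs = bs'" using concat_blocks_inj[OF nc, of bs bs'] by simp
  qed
  have lenf: "length (concat (map ?f bs)) = length bs * L" for bs
    by (induction bs) (auto simp: L_def)
  have sub: "?g ` ?Bs \<subseteq> (\<Union>\<tau>\<in>T. FactN (star_prod (WS \<tau>)) N)"
  proof
    fix y assume "y \<in> ?g ` ?Bs"
    then obtain bs where bs: "length bs = k" "y = ?g bs" by auto
    have "concat (map ?f bs) \<in> kstar {u, v}"
    proof (rule kstar_concat, rule subsetI)
      fix z assume "z \<in> set (map ?f bs)"
      then have "z = u @ v \<or> z = v @ u" by auto
      then show "z \<in> kstar {u, v}" by (auto intro: kstar_app kstar_single)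
    qed
    then obtain \<tau> a1 b1 where t: "\<tau> \<in> T" and h: "a1 @ u2 @ concat (map ?f bs) @ b1 \<in> star_prod (WS \<tau>)"
      using H by blast
    have ly: "length y = N" using bs lenf[of bs] by (simp add: N_def)
    have "a1 @ y @ b1 \<in> star_prod (WS \<tau>)" using bs(2) h by simp
    then have "y \<in> FactN (star_prod (WS \<tau>)) N" using ly unfolding FactN_def by blast
    then show "y \<in> (\<Union>\<tau>\<in>T. FactN (star_prod (WS \<tau>)) N)" using t by blast
  qed
  have finU: "finite (\<Union>\<tau>\<in>T. FactN (star_prod (WS \<tau>)) N)" using fin Kf by auto
  have "2 ^ k = card (?g ` ?Bs)" using cardB card_image[OF inj] by simp
  also have "\<dots> \<le> card (\<Union>\<tau>\<in>T. FactN (star_prod (WS \<tau>)) N)" by (rule card_mono[OF finU sub])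
  also have "\<dots> \<le> (\<Sum>\<tau>\<in>T. card (FactN (star_prod (WS \<tau>)) N))" by (rule card_UN_le[OF fin])
  also have "\<dots> \<le> (\<Sum>\<tau>\<in>T. Kf \<tau> * (N+1)^M)"
  proof (rule sum_mono)
    fix \<tau> assume t: "\<tau> \<in> T"
    have "length (WS \<tau>) \<le> M" unfolding M_def using fin t by (intro Max_ge) auto
    then have "(N+1)^(length (WS \<tau>)) \<le> (N+1)^M" by (intro power_increasing) auto
    then show "card (FactN (star_prod (WS \<tau>)) N) \<le> Kf \<tau> * (N+1)^M"
      using Kf[of \<tau> N] by (meson le_trans mult_le_mono2)
  qed
  also have "\<dots> = KK * (N+1)^M" by (simp add: KK_def sum_distrib_right)
  finally show False using k unfolding N_def by simp
qed




lemma allQ_bl: "allQ a \<Longrightarrow> bl a = []"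
proof -
  assume "allQ a"
  then have e: "dropWhile isQ a = []" by (simp add: allQ_def)
  show ?thesis unfolding bl_def by (subst e) simp
qed

lemma pi_Nil_allQ: "piQ a = [] \<Longrightarrow> allQ a"
  by (auto simp: piQ_def allQ_def filter_empty_conv)

lemma pi_concat: "piQ (concat ws) = concat (map piQ ws)"
  by (induction ws) (auto simp: piQ_def)

lemma kstar_allQ: "w \<in> kstar L \<Longrightarrow> (\<forall>s\<in>L. allQ s) \<Longrightarrow> allQ w"
  by (auto simp: kstar_def allQ_def) (meson subsetD)

lemma kstar_elim: "w \<in> kstar L \<Longrightarrow> \<exists>ws. w = concat ws \<and> set ws \<subseteq> L"
  by (auto simp: kstar_def)

context ctx
begin

lemma len_rend: "length (rend b) \<le> Suc (Max (range (\<lambda>\<tau>. length (Xs \<tau>))))"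
proof -
  have "length (Xs \<tau>) \<le> Max (range (\<lambda>\<tau>. length (Xs \<tau>)))" for \<tau>
    by (intro Max_ge finite_imageI) auto
  then show ?thesis by (auto simp: rend_def split: fsym.splits)
qed

lemma len_gz: "length (gz z) \<le> Suc (Max (range (\<lambda>\<tau>. length (Xs \<tau>)))) * length z"
proof -
  let ?M = "Suc (Max (range (\<lambda>\<tau>. length (Xs \<tau>))))"
  have "length (concat (map rend bs)) \<le> ?M * length bs" for bs
  proof (induction bs)
    case Nil show ?case by simp
  next
    case (Cons b bs)
    have "length (rend b) \<le> ?M" by (rule len_rend)
    then show ?case using Cons by simp
  qed
  then show ?thesis unfolding gz_def using length_bl[of z]
    by (meson le_trans mult_le_mono2)
qed

lemma main_ctx:
  assumes H: "contains_lin_fooling_set (RegFlat A R) (nu_f A)"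
  shows "contains_lin_fooling_set (Flat A) (nu_f A)"
proof -
  obtain u2 v2 u v Z where sch: "linear_fooling_scheme (nu_f A) u2 v2 u v Z"
    and sub: "fool_set u2 v2 u v Z \<subseteq> RegFlat A R"
    using H by (auto simp: contains_lin_fooling_set_def)
  obtain x y z where u: "u = x @ u2" and v: "v = y @ v2" and len: "length u2 = length v2"
    and dom: "fool_set u2 v2 u v Z \<subseteq> {w. nu_f A w \<noteq> None}"
    and zZ: "\<And>n. z n \<in> Z" and zO: "(\<lambda>n. real (length (z n))) \<in> O(\<lambda>n. real n)"
    and dist: "\<And>n w. w \<in> upto_pow u v n \<Longrightarrow> nu_f A (u2 @ w @ z n) \<noteq> nu_f A (v2 @ w @ z n)"
    using sch unfolding linear_fooling_scheme_def by blast
  have mem: "s @ w @ zz \<in> fool_set u2 v2 u v Z" if "s \<in> {u2, v2}" "w \<in> kstar {u, v}" "zz \<in> Z" for s w zz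
    using that unfolding fool_set_def conc_def by blast
  have regm: "s @ w @ zz \<in> RegFlat A R" if "s \<in> {u2, v2}" "w \<in> kstar {u, v}" "zz \<in> Z" for s w zz
    using mem[OF that] sub by blast
  have "[] \<in> upto_pow u v 0" by (auto simp: upto_pow_def intro!: exI[of _ "[]"])
  then have "nu_f A (u2 @ [] @ z 0) \<noteq> nu_f A (v2 @ [] @ z 0)" by (rule dist)
  then have uv2: "u2 \<noteq> v2" by auto
  then have u2ne: "u2 \<noteq> []" and v2ne: "v2 \<noteq> []" using len by auto
  show ?thesis
  proof (cases "piQ u = [] \<and> piQ v = []")
    case True
    then have uQ: "allQ u" and vQ: "allQ v" using pi_Nil_allQ by auto
    have u2Q: "allQ u2" using uQ u by simp
    have "\<forall>\<tau>. \<exists>ws. R \<tau> \<subseteq> star_prod ws" using ov by (simp add: bounded_overapprox_def bounded_lang_def)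
    then obtain WS where WS: "\<And>\<tau>. R \<tau> \<subseteq> star_prod (WS \<tau>)" by metis
    have Hc: "\<exists>\<tau>\<in>UNIV. \<exists>a b. a @ u2 @ w @ b \<in> star_prod (WS \<tau>)" if w: "w \<in> kstar {u, v}" for w
    proof -
      have wQ: "allQ w" using kstar_allQ[OF w] uQ vQ by auto
      have "u2 @ w @ z 0 \<in> RegFlat A R" using regm[of u2 w "z 0"] w zZ by simp
      then have "GoodR (u2 @ w @ z 0)" using RegFlat_parse by blast
      moreover have "lead ((u2 @ w) @ z 0) = (u2 @ w) @ lead (z 0)"
        by (rule concat1(1)[OF allQ_bl]) (simp add: u2Q wQ)
      ultimately have "(u2 @ w) @ lead (z 0) \<in> (\<Union>\<tau>. Suf (R \<tau>))" by (simp add: GoodR_def)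
      then obtain \<tau> a where "a @ u2 @ w @ lead (z 0) \<in> R \<tau>" by (auto simp: Suf_def)
      then show ?thesis using WS by blast
    qed
    have comm: "u @ v = v @ u"
    proof (rule ccontr)
      assume nc: "u @ v \<noteq> v @ u"
      from bounded_contra[OF _ Hc nc]
      show False by simp
    qed
    have "(v @ x) @ u2 = (u @ y) @ v2" using comm u v by simp
    then have "u2 = v2" using len by (metis append_eq_append_conv)
    with uv2 show ?thesis by simp
  next
    case False
    then obtain c where c: "c \<in> {u, v}" "piQ c \<noteq> []" by auto
    have ckstar: "c \<in> kstar {u, v}" using c by (auto intro: kstar_single)
    have blx: "bl (c @ x) \<noteq> []" using c(2) pi_bl[of "c @ x"] by auto
    have bly: "bl (c @ y) \<noteq> []" using c(2) pi_bl[of "c @ y"] by auto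
    have Gs: "GoodR (s @ w @ zz)" if "s \<in> {u2, v2}" "w \<in> kstar {u, v}" "zz \<in> Z" for s w zz
      using RegFlat_parse[OF regm[OF that]] by blast
    have G1u: "GoodR (u2 @ z 0)" using Gs[of u2 "[]" "z 0"] zZ by simp
    have G1v: "GoodR (v2 @ z 0)" using Gs[of v2 "[]" "z 0"] zZ by simp
    have cu: "c @ u \<in> kstar {u, v}" "c @ v \<in> kstar {u, v}" using ckstar by (auto intro: kstar_app kstar_single)
    have G2u: "GoodR (u2 @ (c @ x) @ u2 @ z 0)" using Gs[of u2 "c @ u" "z 0"] cu zZ u by simp
    have G2v: "GoodR (v2 @ (c @ y) @ v2 @ z 0)" using Gs[of v2 "c @ v" "z 0"] cu zZ v by simp
    obtain Pu Bu Xu where SU: "Pu \<in> S0 A" "Bu \<in> kstar FF" "Xu @ Pu \<in> kstar FF" "piQ Xu = piQ (c @ x)"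
      "piQ (Pu @ Bu) = piQ u2" "hq (Pu @ Bu) = hq u2" "length (Pu @ Bu) = length u2 + length (lead (z 0))"
      "Pu @ Bu \<noteq> []"
      using side[OF u2ne blx G1u G2u] by blast
    obtain Pv Bv Yv where SV: "Pv \<in> S0 A" "Bv \<in> kstar FF" "Yv @ Pv \<in> kstar FF" "piQ Yv = piQ (c @ y)"
      "piQ (Pv @ Bv) = piQ v2" "hq (Pv @ Bv) = hq v2" "length (Pv @ Bv) = length v2 + length (lead (z 0))"
      "Pv @ Bv \<noteq> []"
      using side[OF v2ne bly G1v G2v] by blast
    define U2 where "U2 = Pu @ Bu"
    define V2 where "V2 = Pv @ Bv"
    define U where "U = Xu @ U2"
    define V where "V = Yv @ V2"
    define bk where "bk = (\<lambda>s. if s = U then c @ u else c @ v)"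
    have Uk: "U \<in> kstar FF" using SU unfolding U_def U2_def by (metis append.assoc kstar_app)
    have Vk: "V \<in> kstar FF" using SV unfolding V_def V2_def by (metis append.assoc kstar_app)
    have piU: "piQ U = piQ (c @ u)" using SU u unfolding U_def U2_def by simp
    have piV: "piQ V = piQ (c @ v)" using SV v unfolding V_def V2_def by simp
    have pibk: "piQ s = piQ (bk s)" if "s \<in> {U, V}" for s
      using that piU piV by (auto simp: bk_def)
    have gzk: "gz zz \<in> kstar FF \<and> piQ (gz zz) = piQ zz" if zz: "zz \<in> Z" for zz
    proof -
      obtain pre where "bl (u2 @ zz) = pre @ bl zz" using concat3 by blast
      then have "\<forall>b\<in>set (bl zz). okR (fst b) (snd b)" using Gs[of u2 "[]" zz] zz by (auto simp: GoodR_def)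
      then show ?thesis using rend_list pi_bl[of zz] unfolding gz_def by simp
    qed
    have key: "s' @ concat ws' @ gz zz \<in> Flat A
       \<and> nu_f A (s' @ concat ws' @ gz zz) = nu_f A (s @ concat (map bk ws') @ zz)
       \<and> concat (map bk ws') \<in> kstar {u, v}
       \<and> concat (map bk ws') \<in> upto_pow u v (2 * length ws')"
      if ss: "(s' = U2 \<and> s = u2) \<or> (s' = V2 \<and> s = v2)" and ws': "set ws' \<subseteq> {U, V}" and zz: "zz \<in> Z"
      for s' s ws' zz
    proof -
      have bkk: "concat (map bk ws') \<in> kstar {u, v}"
        using cu by (intro kstar_concat) (auto simp: bk_def)
      have bkp: "concat (map bk ws') \<in> upto_pow u v (2 * length ws')"
      proof -
        let ?l = "concat (map (\<lambda>s. [c, if s = U then u else v]) ws')"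
        have e1: "concat ?l = concat (map bk ws')" by (induction ws') (auto simp: bk_def)
        have e2: "set ?l \<subseteq> {u, v}" using c by auto
        have e3: "length ?l \<le> 2 * length ws'" by (induction ws') auto
        have "\<exists>wss. concat (map bk ws') = concat wss \<and> set wss \<subseteq> {u, v} \<and> length wss \<le> 2 * length ws'"
          using e1 e2 e3 by (intro exI[of _ ?l]) simp
        then show ?thesis unfolding upto_pow_def by simp
      qed
      have wk: "concat ws' \<in> kstar FF" using ws' Uk Vk by (intro kstar_concat) auto
      obtain P B where PB: "s' = P @ B" "P \<in> S0 A" "B \<in> kstar FF"
        using ss SU SV unfolding U2_def V2_def by blast
      have "s' @ concat ws' @ gz zz = P @ (B @ concat ws' @ gz zz)" using PB by simp
      moreover have "B @ concat ws' @ gz zz \<in> kstar FF" using PB wk gzk[OF zz] by (auto intro: kstar_app)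
      ultimately have fl: "s' @ concat ws' @ gz zz \<in> Flat A" using PB unfolding Flat_def conc_def by blast
      have sreg: "s @ concat (map bk ws') @ zz \<in> RegFlat A R" using regm bkk zz ss by blast
      have "nu_f A (s' @ concat ws' @ gz zz) = nu_f A (s @ concat (map bk ws') @ zz)"
      proof (rule nu_eq)
        show "s' @ concat ws' @ gz zz \<in> AllFlat A" by (rule Flat_AllFlat[OF fl])
        show "s @ concat (map bk ws') @ zz \<in> AllFlat A" using RegFlat_parse[OF sreg] by blast
        have "s' \<noteq> []" "s \<noteq> []" "hq s' = hq s" using ss SU SV u2ne v2ne unfolding U2_def V2_def by auto
        then show "hq (s' @ concat ws' @ gz zz) = hq (s @ concat (map bk ws') @ zz)"
          by (simp add: hq_append)
        have "piQ (concat ws') = piQ (concat (map bk ws'))"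
          using ws' pibk by (induction ws') auto
        moreover have "piQ s' = piQ s" using ss SU SV unfolding U2_def V2_def by auto
        ultimately show "piQ (s' @ concat ws' @ gz zz) = piQ (s @ concat (map bk ws') @ zz)"
          using gzk[OF zz] by simp
      qed
      then show ?thesis using fl bkk bkp by blast
    qed
    define Mx where "Mx = Suc (Max (range (\<lambda>\<tau>. length (Xs \<tau>))))"
    define z' where "z' = (\<lambda>n. gz (z (2 * n)))"
    have lfs: "linear_fooling_scheme (nu_f A) U2 V2 U V (gz ` Z)"
      unfolding linear_fooling_scheme_def
    proof (intro conjI)
      show "\<exists>x. U = x @ U2" by (auto simp: U_def)
      show "\<exists>y. V = y @ V2" by (auto simp: V_def)
      show "length U2 = length V2" using SU SV len by (simp add: U2_def V2_def)
      show "fool_set U2 V2 U V (gz ` Z) \<subseteq> {w. nu_f A w \<noteq> None}"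
      proof
        fix w assume "w \<in> fool_set U2 V2 U V (gz ` Z)"
        then obtain s' ww zz where w: "w = s' @ ww @ gz zz" "s' \<in> {U2, V2}" "ww \<in> kstar {U, V}" "zz \<in> Z"
          by (auto simp: fool_set_def conc_def)
        obtain ws' where ws': "ww = concat ws'" "set ws' \<subseteq> {U, V}" using kstar_elim[OF w(3)] by blast
        obtain s where ss: "(s' = U2 \<and> s = u2) \<or> (s' = V2 \<and> s = v2)" using w(2) by blast
        have "nu_f A w = nu_f A (s @ concat (map bk ws') @ zz)" using key[OF ss ws'(2) w(4)] w ws' by simp
        moreover have "s @ concat (map bk ws') @ zz \<in> fool_set u2 v2 u v Z"
          using mem key[OF ss ws'(2) w(4)] ss w(4) by blast
        ultimately show "w \<in> {w. nu_f A w \<noteq> None}" using dom by auto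
      qed
      show "\<exists>z :: nat \<Rightarrow> ('a,'q) fsym list. (\<forall>n. z n \<in> gz ` Z) \<and> (\<lambda>n. real (length (z n))) \<in> O(\<lambda>n. real n) \<and>
        (\<forall>n. \<forall>w\<in>upto_pow U V n. nu_f A (U2 @ w @ z n) \<noteq> nu_f A (V2 @ w @ z n))"
      proof (intro exI[of _ z'] conjI allI ballI)
        show "z' n \<in> gz ` Z" for n using zZ by (simp add: z'_def)
        show "(\<lambda>n. real (length (z' n))) \<in> O(\<lambda>n. real n)"
        proof -
          obtain C where C: "C > 0" "eventually (\<lambda>n. norm (real (length (z n))) \<le> C * norm (real n)) at_top"
            using zO by (elim landau_o.bigE)
          then obtain N where N: "\<And>n. n \<ge> N \<Longrightarrow> real (length (z n)) \<le> C * real n"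
            by (auto simp: eventually_at_top_linorder)
          have "eventually (\<lambda>n. norm (real (length (z' n))) \<le> (real Mx * C * 2) * norm (real n)) at_top"
            unfolding eventually_at_top_linorder
          proof (intro exI[of _ N] allI impI)
            fix n assume n: "n \<ge> N"
            have "real (length (z' n)) \<le> real Mx * real (length (z (2 * n)))"
              using len_gz[of "z (2 * n)"] unfolding z'_def Mx_def by (metis of_nat_le_iff of_nat_mult)
            also have "\<dots> \<le> real Mx * (C * real (2 * n))" using N[of "2 * n"] n by (intro mult_left_mono) auto
            finally show "norm (real (length (z' n))) \<le> (real Mx * C * 2) * norm (real n)" by (simp add: algebra_simps)
          qed
          then show ?thesis by (rule bigoI)
        qed
        fix n w assume w: "w \<in> upto_pow U V n"
        then obtain ws' where ws': "w = concat ws'" "set ws' \<subseteq> {U, V}" "length ws' \<le> n"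
          by (auto simp: upto_pow_def)
        have ku: "nu_f A (U2 @ w @ z' n) = nu_f A (u2 @ concat (map bk ws') @ z (2 * n))"
          using key[of U2 u2 ws' "z (2 * n)"] ws' zZ by (simp add: z'_def)
        have kv: "nu_f A (V2 @ w @ z' n) = nu_f A (v2 @ concat (map bk ws') @ z (2 * n))"
          using key[of V2 v2 ws' "z (2 * n)"] ws' zZ by (simp add: z'_def)
        have "concat (map bk ws') \<in> upto_pow u v (2 * length ws')" using key[of U2 u2 ws' "z (2 * n)"] ws' zZ by simp
        then have "concat (map bk ws') \<in> upto_pow u v (2 * n)"
          using ws'(3) by (auto simp: upto_pow_def)
        then show "nu_f A (U2 @ w @ z' n) \<noteq> nu_f A (V2 @ w @ z' n)" using ku kv dist by simp
      qed
    qed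
    have "fool_set U2 V2 U V (gz ` Z) \<subseteq> Flat A"
    proof
      fix w assume "w \<in> fool_set U2 V2 U V (gz ` Z)"
      then obtain s' ww zz where w: "w = s' @ ww @ gz zz" "s' \<in> {U2, V2}" "ww \<in> kstar {U, V}" "zz \<in> Z"
        by (auto simp: fool_set_def conc_def)
      obtain ws' where ws': "ww = concat ws'" "set ws' \<subseteq> {U, V}" using kstar_elim[OF w(3)] by blast
      obtain s where ss: "(s' = U2 \<and> s = u2) \<or> (s' = V2 \<and> s = v2)" using w(2) by blast
      show "w \<in> Flat A" using key[OF ss ws'(2) w(4)] w ws' by simp
    qed
    then show ?thesis using lfs unfolding contains_lin_fooling_set_def by blast
  qed
qed

end

theorem proposition14:
  fixes A :: "('a::finite, 'q::{finite,linorder}, 'g::{finite,linorder}) vpa"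
    and R :: "('q \<Rightarrow> 'q) \<Rightarrow> ('a, 'q) fsym list set"
  assumes "wf_vpa A"
    and "lang A \<noteq> {}" and "lang A \<noteq> UNIV"
    and "bounded_lang (S0 A)"
    and "\<forall>\<tau>. bounded_overapprox (lquot \<tau> (S1 A)) (R \<tau>)"
    and "contains_lin_fooling_set (RegFlat A R) (nu_f A)"
  shows "contains_lin_fooling_set (Flat A) (nu_f A)"
proof -
  interpret ctx A R using assms(5) by unfold_locales blast
  show ?thesis using main_ctx[OF assms(6)] .
qed



end
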